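(* For each $n\geq1$, $x-1$ divides $H_{1,n}(x,y)$ and $(x-1)^2$ divides $H_{0,n}(x,y)$ in $\mathbb{Z}[x,y]$.
   Context: Graphs are finite. For a graph $G$, a spanning subgraph $A$ has vertex set $V(G)$ and edge set $E(A)\subseteq E(G)$; $k(A)$ is its number of components, $r(A)=|V(G)|-k(A)$, $n(A)=|E(A)|-r(A)$; the weight of $A$ is $(x-1)^{r(G)-r(A)}(y-1)^{n(A)}$. The graphs $\Sigma_n$ ($n\ge1$; Schreier graphs of the Hanoi Towers group $H^{(3)}$ with loops removed) each have three outmost vertices top, left, right: $\Sigma_1$ is the triangle $K_3$; $\Sigma_{n+1}$ is the disjoint union of three copies $G_1,G_2,G_3$ of $\Sigma_n$ together with three new edges joining left$(G_1)$ to top$(G_2)$, right$(G_1)$ to top$(G_3)$, and right$(G_2)$ to left$(G_3)$; its outmost vertices are top$(G_1)$, left$(G_2)$, right$(G_3)$. $H_{1,n}$ is the sum of the weights (with $G=\Sigma_n$) of the spanning subgraphs of $\Sigma_n$ in which the left and right outmost vertices lie in one component and the top one in another; $H_{0,n}$ is the sum over spanning subgraphs in which the three outmost vertices lie in three distinct components. *)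

theory Defs
  imports "HOL-Computational_Algebra.Polynomial"
begin

text \<open>Vertices of Sigma_n are words of length n over {0,1,2}; the i-th copy G_(i+1)
  of Sigma_n inside Sigma_(n+1) consists of the words starting with i.\<close>

fun sig_verts :: "nat \<Rightarrow> nat list set" where
  "sig_verts 0 = {}"
| "sig_verts (Suc 0) = {[0], [1], [2]}"
| "sig_verts (Suc (Suc n)) = (\<Union>i\<in>{0,1,2}. Cons i ` sig_verts (Suc n))"

fun sig_top :: "nat \<Rightarrow> nat list" where
  "sig_top 0 = []"
| "sig_top (Suc 0) = [0]"
| "sig_top (Suc (Suc n)) = 0 # sig_top (Suc n)"

fun sig_left :: "nat \<Rightarrow> nat list" where
  "sig_left 0 = []"
| "sig_left (Suc 0) = [1]"
| "sig_left (Suc (Suc n)) = 1 # sig_left (Suc n)"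

fun sig_right :: "nat \<Rightarrow> nat list" where
  "sig_right 0 = []"
| "sig_right (Suc 0) = [2]"
| "sig_right (Suc (Suc n)) = 2 # sig_right (Suc n)"

fun sig_edges :: "nat \<Rightarrow> nat list set set" where
  "sig_edges 0 = {}"
| "sig_edges (Suc 0) = {{[0],[1]}, {[0],[2]}, {[1],[2]}}"
| "sig_edges (Suc (Suc n)) =
     (\<Union>i\<in>{0,1,2}. (\<lambda>e. Cons i ` e) ` sig_edges (Suc n))
     \<union> {{0 # sig_left (Suc n), 1 # sig_top (Suc n)},
        {0 # sig_right (Suc n), 2 # sig_top (Suc n)},
        {1 # sig_right (Suc n), 2 # sig_left (Suc n)}}"

definition adj :: "'a set set \<Rightarrow> ('a \<times> 'a) set" where
  "adj A = {(u, v). {u, v} \<in> A}"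

definition same_comp :: "'a set set \<Rightarrow> 'a \<Rightarrow> 'a \<Rightarrow> bool" where
  "same_comp A u v \<longleftrightarrow> (u, v) \<in> (adj A)\<^sup>*"

definition ncomp :: "'a set \<Rightarrow> 'a set set \<Rightarrow> nat" where
  "ncomp V A = card (V // (adj A)\<^sup>*)"

definition rank :: "'a set \<Rightarrow> 'a set set \<Rightarrow> nat" where
  "rank V A = card V - ncomp V A"

definition nullity :: "'a set \<Rightarrow> 'a set set \<Rightarrow> nat" where
  "nullity V A = card A - rank V A"

text \<open>Z[x,y] is represented as int poly poly: polynomials in x with coefficients in Z[y].\<close>
definition X :: "int poly poly" where "X = [:0, 1:]"
definition Y :: "int poly poly" where "Y = [:[:0, 1:]:]"

definition weight :: "'a set \<Rightarrow> 'a set set \<Rightarrow> 'a set set \<Rightarrow> int poly poly" where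
  "weight V E A = (X - 1) ^ (rank V E - rank V A) * (Y - 1) ^ nullity V A"

definition H1 :: "nat \<Rightarrow> int poly poly" where
  "H1 n = (\<Sum>A\<in>{A. A \<subseteq> sig_edges n \<and>
              same_comp A (sig_left n) (sig_right n) \<and>
              \<not> same_comp A (sig_top n) (sig_left n)}.
            weight (sig_verts n) (sig_edges n) A)"

definition H0 :: "nat \<Rightarrow> int poly poly" where
  "H0 n = (\<Sum>A\<in>{A. A \<subseteq> sig_edges n \<and>
              \<not> same_comp A (sig_left n) (sig_right n) \<and>
              \<not> same_comp A (sig_top n) (sig_left n) \<and>
              \<not> same_comp A (sig_top n) (sig_right n)}.
            weight (sig_verts n) (sig_edges n) A)"

end

theory Submission
  imports Defs
begin

lemma fin_verts: "finite (sig_verts n)"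
  by (induction n rule: sig_verts.induct) auto

lemma top_in: "sig_top (Suc n) \<in> sig_verts (Suc n)"
  by (induction n) auto
lemma left_in: "sig_left (Suc n) \<in> sig_verts (Suc n)"
  by (induction n) auto
lemma right_in: "sig_right (Suc n) \<in> sig_verts (Suc n)"
  by (induction n) auto

lemma tlr_in: "n \<ge> 1 \<Longrightarrow> sig_top n \<in> sig_verts n \<and> sig_left n \<in> sig_verts n \<and> sig_right n \<in> sig_verts n"
  by (cases n) (auto simp: top_in left_in right_in)

lemma adj_mono: "A \<subseteq> B \<Longrightarrow> adj A \<subseteq> adj B"
  unfolding adj_def by auto

lemma adj_sym: "(u,v) \<in> adj A \<Longrightarrow> (v,u) \<in> adj A"
  unfolding adj_def by (simp add: insert_commute)

lemma rtr_sym: "(u,v) \<in> (adj A)\<^sup>* \<Longrightarrow> (v,u) \<in> (adj A)\<^sup>*"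
proof -
  have "sym (adj A)" by (rule symI) (rule adj_sym)
  then have s: "sym ((adj A)\<^sup>*)" by (rule sym_rtrancl)
  show "(u,v) \<in> (adj A)\<^sup>* \<Longrightarrow> (v,u) \<in> (adj A)\<^sup>*" by (rule symD[OF s])
qed

lemma cons_rtr:
  assumes "(u,v) \<in> (adj E)\<^sup>*"
  shows "(i#u, i#v) \<in> (adj ((\<lambda>e. Cons i ` e) ` E))\<^sup>*"
  using assms
proof (induction rule: rtrancl_induct)
  case base then show ?case by simp
next
  case (step y z)
  have "{y,z} \<in> E" using step(2) unfolding adj_def by auto
  then have "Cons i ` {y,z} \<in> (\<lambda>e. Cons i ` e) ` E" by blast
  then have "(i#y, i#z) \<in> adj ((\<lambda>e. Cons i ` e) ` E)" unfolding adj_def by auto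
  then show ?case using step(3) by (meson rtrancl.rtrancl_into_rtrancl)
qed

lemma connected: "n \<ge> 1 \<Longrightarrow> v \<in> sig_verts n \<Longrightarrow> (sig_top n, v) \<in> (adj (sig_edges n))\<^sup>*"
proof (induction n arbitrary: v rule: sig_verts.induct)
  case 1 then show ?case by simp
next
  case 2
  then have "v = [0] \<or> v = [1] \<or> v = [2]" by auto
  moreover have "([0],[1]) \<in> adj (sig_edges (Suc 0))" "([0],[2]) \<in> adj (sig_edges (Suc 0))"
    unfolding adj_def by auto
  ultimately show ?case by auto
next
  case (3 m)
  let ?E = "sig_edges (Suc (Suc m))"
  let ?R = "(adj ?E)\<^sup>*"
  have sub: "(\<lambda>e. Cons i ` e) ` sig_edges (Suc m) \<subseteq> ?E" if "i \<in> {0,1,2}" for i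
    using that by auto
  have lift: "(i # sig_top (Suc m), i # w) \<in> ?R" if "i \<in> {0,1,2}" "w \<in> sig_verts (Suc m)" for i w
  proof -
    have "(sig_top (Suc m), w) \<in> (adj (sig_edges (Suc m)))\<^sup>*" using 3 that by simp
    then have "(i # sig_top (Suc m), i # w) \<in> (adj ((\<lambda>e. Cons i ` e) ` sig_edges (Suc m)))\<^sup>*"
      by (rule cons_rtr)
    moreover have "(adj ((\<lambda>e. Cons i ` e) ` sig_edges (Suc m)))\<^sup>* \<subseteq> ?R"
      by (rule rtrancl_mono[OF adj_mono[OF sub[OF that(1)]]])
    ultimately show ?thesis by blast
  qed
  have tlr: "sig_top (Suc m) \<in> sig_verts (Suc m)" "sig_left (Suc m) \<in> sig_verts (Suc m)"
    "sig_right (Suc m) \<in> sig_verts (Suc m)" using tlr_in[of "Suc m"] by auto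
  have b1: "(0 # sig_left (Suc m), 1 # sig_top (Suc m)) \<in> adj ?E" unfolding adj_def by simp
  have b2: "(0 # sig_right (Suc m), 2 # sig_top (Suc m)) \<in> adj ?E" unfolding adj_def by simp
  have t1: "(0 # sig_top (Suc m), 1 # sig_top (Suc m)) \<in> ?R"
    using lift[of 0, OF _ tlr(2)] b1 by (meson insertI1 rtrancl.rtrancl_into_rtrancl)
  have t2: "(0 # sig_top (Suc m), 2 # sig_top (Suc m)) \<in> ?R"
    using lift[of 0, OF _ tlr(3)] b2 by (meson insertI1 rtrancl.rtrancl_into_rtrancl)
  from 3(3) obtain i w where iw: "i \<in> {0,1,2}" "w \<in> sig_verts (Suc m)" "v = i # w" by auto
  have c: "(0 # sig_top (Suc m), i # sig_top (Suc m)) \<in> ?R"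
    using iw(1) t1 t2 by auto
  have e: "(0 # sig_top (Suc m), v) \<in> ?R"
    unfolding iw(3) by (rule rtrancl_trans[OF c lift[OF iw(1,2)]])
  show ?case using e by (simp only: sig_top.simps)
qed

lemma ncomp_E: assumes "n \<ge> 1" shows "ncomp (sig_verts n) (sig_edges n) = 1"
proof -
  let ?R = "(adj (sig_edges n))\<^sup>*"
  have "\<forall>v\<in>sig_verts n. ?R `` {v} = ?R `` {sig_top n}"
  proof
    fix v assume v: "v \<in> sig_verts n"
    have a: "(sig_top n, v) \<in> ?R" using connected[OF assms v] .
    have b: "(v, sig_top n) \<in> ?R" using rtr_sym[OF a] .
    show "?R `` {v} = ?R `` {sig_top n}"
      using a b by (auto intro: rtrancl_trans)
  qed
  then have "sig_verts n // ?R = {?R `` {sig_top n}}"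
  proof -
    assume h: "\<forall>v\<in>sig_verts n. ?R `` {v} = ?R `` {sig_top n}"
    have "sig_verts n // ?R = (\<lambda>v. ?R `` {v}) ` sig_verts n" unfolding quotient_def by blast
    also have "\<dots> = (\<lambda>v. ?R `` {sig_top n}) ` sig_verts n" using h by (intro image_cong) auto
    also have "\<dots> = {?R `` {sig_top n}}" using tlr_in[OF assms] by blast
    finally show ?thesis .
  qed
  then show ?thesis unfolding ncomp_def by simp
qed

lemma cls_ne: "(a,b) \<notin> R\<^sup>* \<Longrightarrow> R\<^sup>* `` {a} \<noteq> R\<^sup>* `` {b}"
  by (metis ImageE Image_singleton_iff rtrancl.rtrancl_refl)

lemma ncomp_le: "finite V \<Longrightarrow> ncomp V A \<le> card V"
proof -
  assume f: "finite V"
  have "V // (adj A)\<^sup>* = (\<lambda>x. (adj A)\<^sup>* `` {x}) ` V" unfolding quotient_def by auto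
  then show ?thesis unfolding ncomp_def using card_image_le[OF f] by simp
qed

lemma ncomp_ge2: "finite V \<Longrightarrow> a \<in> V \<Longrightarrow> b \<in> V \<Longrightarrow> (a,b) \<notin> (adj A)\<^sup>* \<Longrightarrow> ncomp V A \<ge> 2"
proof -
  assume f: "finite V" and ab: "a \<in> V" "b \<in> V" "(a,b) \<notin> (adj A)\<^sup>*"
  let ?R = "(adj A)\<^sup>*"
  have s: "{?R``{a}, ?R``{b}} \<subseteq> V // ?R" using ab unfolding quotient_def by auto
  have fin: "finite (V // ?R)" using f unfolding quotient_def by auto
  have "card {?R``{a}, ?R``{b}} = 2" using cls_ne[OF ab(3)] by simp
  then show ?thesis unfolding ncomp_def using card_mono[OF fin s] by simp
qed

lemma ncomp_ge3: "finite V \<Longrightarrow> a \<in> V \<Longrightarrow> b \<in> V \<Longrightarrow> c \<in> V \<Longrightarrow> (a,b) \<notin> (adj A)\<^sup>* \<Longrightarrow>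
   (a,c) \<notin> (adj A)\<^sup>* \<Longrightarrow> (b,c) \<notin> (adj A)\<^sup>* \<Longrightarrow> ncomp V A \<ge> 3"
proof -
  assume f: "finite V" and ab: "a \<in> V" "b \<in> V" "c \<in> V" "(a,b) \<notin> (adj A)\<^sup>*"
    "(a,c) \<notin> (adj A)\<^sup>*" "(b,c) \<notin> (adj A)\<^sup>*"
  let ?R = "(adj A)\<^sup>*"
  have s: "{?R``{a}, ?R``{b}, ?R``{c}} \<subseteq> V // ?R" using ab unfolding quotient_def by auto
  have fin: "finite (V // ?R)" using f unfolding quotient_def by auto
  have "card {?R``{a}, ?R``{b}, ?R``{c}} = 3"
    using cls_ne[OF ab(4)] cls_ne[OF ab(5)] cls_ne[OF ab(6)] by simp
  then show ?thesis unfolding ncomp_def using card_mono[OF fin s] by simp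
qed

lemma rank_diff: assumes "n \<ge> 1"
  shows "rank (sig_verts n) (sig_edges n) - rank (sig_verts n) A = ncomp (sig_verts n) A - 1"
  using ncomp_E[OF assms] ncomp_le[OF fin_verts, of n A] unfolding rank_def by simp

lemma weight_dvd: "k \<le> rank V E - rank V A \<Longrightarrow> (X - 1) ^ k dvd weight V E A"
  unfolding weight_def by (simp add: le_imp_power_dvd)

theorem lemma4p5:
  fixes n :: nat
  assumes "n \<ge> 1"
  shows "(X - 1) dvd H1 n \<and> (X - 1)\<^sup>2 dvd H0 n"
proof
  have V: "finite (sig_verts n)" by (rule fin_verts)
  note t = tlr_in[OF assms]
  show "(X - 1) dvd H1 n" unfolding H1_def
  proof (rule dvd_sum)
    fix A assume "A \<in> {A. A \<subseteq> sig_edges n \<and> same_comp A (sig_left n) (sig_right n) \<and>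
              \<not> same_comp A (sig_top n) (sig_left n)}"
    then have "(sig_top n, sig_left n) \<notin> (adj A)\<^sup>*" unfolding same_comp_def by auto
    then have "ncomp (sig_verts n) A \<ge> 2" using ncomp_ge2[OF V] t by blast
    then have "1 \<le> rank (sig_verts n) (sig_edges n) - rank (sig_verts n) A"
      using rank_diff[OF assms] by simp
    from weight_dvd[OF this] show "(X - 1) dvd weight (sig_verts n) (sig_edges n) A" by simp
  qed
  show "(X - 1)\<^sup>2 dvd H0 n" unfolding H0_def
  proof (rule dvd_sum)
    fix A assume "A \<in> {A. A \<subseteq> sig_edges n \<and>
              \<not> same_comp A (sig_left n) (sig_right n) \<and>
              \<not> same_comp A (sig_top n) (sig_left n) \<and>
              \<not> same_comp A (sig_top n) (sig_right n)}"
    then have "(sig_top n, sig_left n) \<notin> (adj A)\<^sup>*" "(sig_top n, sig_right n) \<notin> (adj A)\<^sup>*"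
      "(sig_left n, sig_right n) \<notin> (adj A)\<^sup>*" unfolding same_comp_def by auto
    then have "ncomp (sig_verts n) A \<ge> 3" using ncomp_ge3[OF V] t by blast
    then have "2 \<le> rank (sig_verts n) (sig_edges n) - rank (sig_verts n) A"
      using rank_diff[OF assms] by simp
    from weight_dvd[OF this] show "(X - 1)\<^sup>2 dvd weight (sig_verts n) (sig_edges n) A" by simp
  qed
qed

end
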